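(* For any $d_y,M\in\mathbb{N}$ and any $\delta>0$, there exists a $\textsc{ReLU}$ network $f:\mathbb R\rightarrow\mathbb R^{d_y}$ of width $d_y$ such that $f(c)=\mathtt{decode}_M(c)$ for all $c\in\mathcal C_{d_yM}$. Furthermore, $f(\mathbb R)\subset[0,1]^{d_y}$.
   Context: For $n\in\mathbb N$, $\mathcal C_n:=\{0,2^{-n},2\cdot2^{-n},\dots,1-2^{-n}\}$ and $q_n:[0,1]\to\mathcal C_n$, $q_n(x)=\max\{c\in\mathcal C_n:c\le x\}$. For $y\in[0,1]^{d_y}$, $\mathtt{encode}_M(y):=\sum_{i=1}^{d_y}q_M(y_i)\,2^{-(i-1)M}\in\mathcal C_{d_yM}$. $\mathtt{decode}_M:\mathcal C_{d_yM}\to\mathcal C_M^{d_y}$ maps $c$ to the unique $\hat y\in\mathcal C_M^{d_y}$ with $\mathtt{encode}_M(\hat y)=c$ (i.e., $\sum_{i=1}^{d_y}\hat y_i 2^{-(i-1)M}=c$). A $\textsc{ReLU}$ network is $t_L\circ\sigma_{L-1}\circ\cdots\circ\sigma_1\circ t_1$ with affine $t_\ell:\mathbb R^{d_{\ell-1}}\to\mathbb R^{d_\ell}$ and coordinatewise $\textsc{ReLU}$ $\sigma_\ell$; its width is $\max\{d_1,\dots,d_{L-1}\}$. *)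

theory Defs
  imports Complex_Main
begin

definition dyadic :: "nat \<Rightarrow> real set" where
  "dyadic n = {real k / 2 ^ n | k. k < 2 ^ n}"

definition quant :: "nat \<Rightarrow> real \<Rightarrow> real" where
  "quant n x = Max {c \<in> dyadic n. c \<le> x}"

text \<open>Vectors in R^{d_y} are functions nat => real, coordinates 0..d_y-1
  (paper index i corresponds to index i-1 here).\<close>
definition encode :: "nat \<Rightarrow> nat \<Rightarrow> (nat \<Rightarrow> real) \<Rightarrow> real" where
  "encode dy M y = (\<Sum>i<dy. quant M (y i) / 2 ^ (i * M))"

text \<open>decode_M c = the unique yhat in C_M^{d_y} with encode_M yhat = c
  (coordinates beyond d_y fixed to 0 for uniqueness as a function).\<close>
definition decode :: "nat \<Rightarrow> nat \<Rightarrow> real \<Rightarrow> (nat \<Rightarrow> real)" where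
  "decode dy M c = (THE yh. (\<forall>i<dy. yh i \<in> dyadic M) \<and> (\<forall>i\<ge>dy. yh i = 0)
                        \<and> encode dy M yh = c)"

definition relu :: "real \<Rightarrow> real" where
  "relu x = max 0 x"

type_synonym layer = "(nat \<Rightarrow> nat \<Rightarrow> real) \<times> (nat \<Rightarrow> real)"

definition affine :: "layer \<Rightarrow> nat \<Rightarrow> (nat \<Rightarrow> real) \<Rightarrow> (nat \<Rightarrow> real)" where
  "affine l n x = (\<lambda>i. (\<Sum>j<n. fst l i j * x j) + snd l i)"

text \<open>dims = [d_0, d_1, ..., d_L], layers = [t_1, ..., t_L];
  network = t_L o sigma o ... o sigma o t_1.\<close>
fun net_eval :: "nat list \<Rightarrow> layer list \<Rightarrow> (nat \<Rightarrow> real) \<Rightarrow> (nat \<Rightarrow> real)" where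
  "net_eval (d0 # ds) [l] x = affine l d0 x"
| "net_eval (d0 # ds) (l # l' # ls) x = net_eval ds (l' # ls) (\<lambda>i. relu (affine l d0 x i))"
| "net_eval _ _ x = x"

definition net_width :: "nat list \<Rightarrow> nat" where
  "net_width dims = foldr max (butlast (tl dims)) 0"

definition relu_net :: "nat \<Rightarrow> nat \<Rightarrow> nat list \<Rightarrow> layer list \<Rightarrow> bool" where
  "relu_net din dout dims layers \<longleftrightarrow>
     layers \<noteq> [] \<and> length dims = length layers + 1 \<and>
     hd dims = din \<and> last dims = dout"

end

theory Submission
  imports Defs
begin

lemma dyadic_finite: "finite (dyadic n)"
proof -
  have "dyadic n = (\<lambda>k. real k / 2^n) ` {..<2^n}" unfolding dyadic_def by auto
  thus ?thesis by simp
qed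

lemma dyadic_bounds: "d \<in> dyadic n \<Longrightarrow> 0 \<le> d \<and> d < 1"
proof -
  assume "d \<in> dyadic n"
  then obtain k where k: "d = real k / 2^n" "k < 2^n" unfolding dyadic_def by auto
  have "real k < 2^n" using k(2) by (metis of_nat_less_numeral_power_cancel_iff)
  thus ?thesis using k(1) by simp
qed

lemma quant_dyadic: "d \<in> dyadic n \<Longrightarrow> quant n d = d"
  unfolding quant_def by (rule Max_eqI) (auto intro: finite_subset[OF _ dyadic_finite])

lemma digits_ex:
  fixes B :: nat assumes "B > 0"
  shows "k < B ^ n \<Longrightarrow> \<exists>a. (\<forall>i<n. a i < B) \<and> (\<Sum>i<n. a i * B ^ (n - 1 - i)) = k"
proof (induction n arbitrary: k)
  case 0 thus ?case by simp
next
  case (Suc n)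
  have "k div B < B ^ n" using Suc.prems assms by (simp add: div_less_iff_less_mult mult.commute)
  then obtain a where a: "\<forall>i<n. a i < B" "(\<Sum>i<n. a i * B ^ (n - 1 - i)) = k div B" using Suc.IH by blast
  define a' where "a' = a(n := k mod B)"
  have "(\<Sum>i<Suc n. a' i * B ^ (Suc n - 1 - i)) = (\<Sum>i<n. a i * B ^ (n - i)) + k mod B"
  proof -
    have "(\<Sum>i<Suc n. a' i * B ^ (Suc n - 1 - i)) = (\<Sum>i<n. a' i * B ^ (n - i)) + k mod B"
      by (simp add: a'_def)
    also have "(\<Sum>i<n. a' i * B ^ (n - i)) = (\<Sum>i<n. a i * B ^ (n - i))"
      by (rule sum.cong) (auto simp: a'_def)
    finally show ?thesis .
  qed
  also have "(\<Sum>i<n. a i * B ^ (n - i)) = B * (\<Sum>i<n. a i * B ^ (n - 1 - i))"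
    unfolding sum_distrib_left
    by (rule sum.cong) (auto simp: power_Suc[symmetric] Suc_diff_Suc)
  also have "B * (\<Sum>i<n. a i * B ^ (n - 1 - i)) + k mod B = k" unfolding a(2) by (rule mult_div_mod_eq)
  finally have s: "(\<Sum>i<Suc n. a' i * B ^ (Suc n - 1 - i)) = k" .
  have "\<forall>i<Suc n. a' i < B" using a(1) assms by (auto simp: a'_def)
  with s show ?case by (intro exI[of _ a'] conjI)
qed

lemma digits_uniq:
  fixes B :: nat assumes "B > 0"
  shows "(\<forall>i<n. a i < B) \<Longrightarrow> (\<forall>i<n. b i < B) \<Longrightarrow>
    (\<Sum>i<n. a i * B ^ (n - 1 - i)) = (\<Sum>i<n. b i * B ^ (n - 1 - i)) \<Longrightarrow> \<forall>i<n. a i = b i"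
proof (induction n)
  case 0 thus ?case by simp
next
  case (Suc n)
  have split: "(\<Sum>i<Suc n. f i * B ^ (Suc n - 1 - i)) = B * (\<Sum>i<n. f i * B ^ (n - 1 - i)) + f n" for f
  proof -
    have "(\<Sum>i<Suc n. f i * B ^ (Suc n - 1 - i)) = (\<Sum>i<n. f i * B ^ (n - i)) + f n" by simp
    also have "(\<Sum>i<n. f i * B ^ (n - i)) = B * (\<Sum>i<n. f i * B ^ (n - 1 - i))"
      unfolding sum_distrib_left
      by (rule sum.cong) (auto simp: power_Suc[symmetric] Suc_diff_Suc)
    finally show ?thesis .
  qed
  have e: "B * (\<Sum>i<n. a i * B ^ (n - 1 - i)) + a n = B * (\<Sum>i<n. b i * B ^ (n - 1 - i)) + b n"
    using Suc.prems(3) unfolding split .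
  have an: "a n < B" "b n < B" using Suc.prems by auto
  have dm: "(B*x + r) div B = x" "(B*x + r) mod B = r" if "r<B" for x r using that assms by simp_all
  have "a n = b n" using arg_cong[OF e, of "\<lambda>x. x mod B"] an dm(2) by metis
  moreover have "(\<Sum>i<n. a i * B ^ (n - 1 - i)) = (\<Sum>i<n. b i * B ^ (n - 1 - i))"
    using arg_cong[OF e, of "\<lambda>x. x div B"] an dm(1) by metis
  moreover have "\<forall>i<n. a i < B" "\<forall>i<n. b i < B" using Suc.prems(1,2) by auto
  ultimately have "\<forall>i<n. a i = b i" "a n = b n" using Suc.IH by blast+
  thus ?case using less_Suc_eq by auto
qed

lemma encode_dyadic:
  assumes "\<forall>i<dy. yh i \<in> dyadic M"
  shows "encode dy M yh = (\<Sum>i<dy. yh i / 2 ^ (i * M))"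
  unfolding encode_def using assms quant_dyadic by (intro sum.cong) auto

lemma pow_split:
  assumes "i < n"
  shows "(2::real) ^ (n * M) = 2 ^ M * 2 ^ (i * M) * (2 ^ M) ^ (n - 1 - i)"
proof -
  obtain j where j: "n = Suc (i + j)" using less_imp_Suc_add[OF assms] by blast
  have "n - 1 - i = j" using j by simp
  moreover have "n * M = M + i * M + M * j" using j by (simp add: algebra_simps)
  ultimately show ?thesis by (simp add: power_add power_mult)
qed

lemma digit_sum_real:
  "(\<Sum>i<n. real (a i) / 2 ^ M / 2 ^ (i * M)) = real (\<Sum>i<n. a i * (2 ^ M) ^ (n - 1 - i)) / 2 ^ (n * M)"
proof -
  have "(\<Sum>i<n. real (a i) / 2 ^ M / 2 ^ (i * M)) = (\<Sum>i<n. real (a i) * (2 ^ M) ^ (n - 1 - i) / 2 ^ (n * M))"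
  proof (rule sum.cong)
    fix i assume "i \<in> {..<n}"
    hence e: "(2::real) ^ (n * M) = 2 ^ M * 2 ^ (i * M) * (2 ^ M) ^ (n - 1 - i)" using pow_split by auto
    show "real (a i) / 2 ^ M / 2 ^ (i * M) = real (a i) * (2 ^ M) ^ (n - 1 - i) / 2 ^ (n * M)"
      unfolding e by (simp add: field_simps)
  qed simp
  also have "\<dots> = real (\<Sum>i<n. a i * (2 ^ M) ^ (n - 1 - i)) / 2 ^ (n * M)"
    by (simp add: sum_divide_distrib)
  finally show ?thesis .
qed

lemma dyadic_nat: "d \<in> dyadic M \<Longrightarrow> \<exists>a. a < 2 ^ M \<and> d = real a / 2 ^ M"
  unfolding dyadic_def by auto

lemma dyadic_choice:
  assumes "\<forall>i<dy. y i \<in> dyadic M"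
  shows "\<exists>a. \<forall>i<dy. a i < 2 ^ M \<and> y i = real (a i) / 2 ^ M"
proof -
  define a where "a i = (SOME k. k < 2 ^ M \<and> y i = real k / 2 ^ M)" for i
  have "a i < 2 ^ M \<and> y i = real (a i) / 2 ^ M" if "i < dy" for i
  proof -
    have "y i \<in> dyadic M" using assms that by blast
    hence "\<exists>k. k < 2 ^ M \<and> y i = real k / 2 ^ M" by (rule dyadic_nat)
    thus ?thesis unfolding a_def by (rule someI_ex)
  qed
  thus ?thesis by blast
qed

lemma decode_ex1:
  assumes "c \<in> dyadic (dy * M)"
  shows "\<exists>!yh. (\<forall>i<dy. yh i \<in> dyadic M) \<and> (\<forall>i\<ge>dy. yh i = 0) \<and> encode dy M yh = c"
proof -
  define B :: nat where "B = 2 ^ M"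
  have B0: "B > 0" by (simp add: B_def)
  obtain k where k: "c = real k / 2 ^ (dy * M)" "k < 2 ^ (dy * M)" using assms unfolding dyadic_def by auto
  have "k < B ^ dy" using k(2) by (simp add: B_def power_mult mult.commute)
  then obtain a where a: "\<forall>i<dy. a i < B" "(\<Sum>i<dy. a i * B ^ (dy - 1 - i)) = k"
    using digits_ex[OF B0] by blast
  define yh where "yh = (\<lambda>i. if i < dy then real (a i) / 2 ^ M else 0)"
  have yd: "\<forall>i<dy. yh i \<in> dyadic M" using a(1) unfolding yh_def dyadic_def B_def by auto
  have "encode dy M yh = (\<Sum>i<dy. real (a i) / 2 ^ M / 2 ^ (i * M))"
    unfolding encode_dyadic[OF yd] by (rule sum.cong) (auto simp: yh_def)
  also have "\<dots> = c" unfolding digit_sum_real k(1) using a(2) by (simp add: B_def)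
  finally have ex: "(\<forall>i<dy. yh i \<in> dyadic M) \<and> (\<forall>i\<ge>dy. yh i = 0) \<and> encode dy M yh = c"
    using yd by (auto simp: yh_def)
  have un: "y1 = y2" if h1: "(\<forall>i<dy. y1 i \<in> dyadic M) \<and> (\<forall>i\<ge>dy. y1 i = 0) \<and> encode dy M y1 = c"
    and h2: "(\<forall>i<dy. y2 i \<in> dyadic M) \<and> (\<forall>i\<ge>dy. y2 i = 0) \<and> encode dy M y2 = c" for y1 y2
  proof -
    obtain a1 where a1: "\<forall>i<dy. a1 i < 2 ^ M \<and> y1 i = real (a1 i) / 2 ^ M"
      using dyadic_choice conjunct1[OF h1] by blast
    obtain a2 where a2: "\<forall>i<dy. a2 i < 2 ^ M \<and> y2 i = real (a2 i) / 2 ^ M"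
      using dyadic_choice conjunct1[OF h2] by blast
    have "encode dy M y1 = (\<Sum>i<dy. real (a1 i) / 2 ^ M / 2 ^ (i * M))"
      unfolding encode_dyadic[OF conjunct1[OF h1]] using a1 by (intro sum.cong) auto
    hence e1: "c = real (\<Sum>i<dy. a1 i * (2 ^ M) ^ (dy - 1 - i)) / 2 ^ (dy * M)"
      using h1 digit_sum_real by simp
    have "encode dy M y2 = (\<Sum>i<dy. real (a2 i) / 2 ^ M / 2 ^ (i * M))"
      unfolding encode_dyadic[OF conjunct1[OF h2]] using a2 by (intro sum.cong) auto
    hence e2: "c = real (\<Sum>i<dy. a2 i * (2 ^ M) ^ (dy - 1 - i)) / 2 ^ (dy * M)"
      using h2 digit_sum_real by simp
    have dc: "x = y" if "x / (2::real) ^ m = y / 2 ^ m" for x y m using that by simp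
    have "real (\<Sum>i<dy. a1 i * (2 ^ M) ^ (dy - 1 - i)) = real (\<Sum>i<dy. a2 i * (2 ^ M) ^ (dy - 1 - i))"
      by (rule dc) (rule trans[OF sym[OF e1] e2])
    hence N: "(\<Sum>i<dy. a1 i * (2 ^ M) ^ (dy - 1 - i)) = (\<Sum>i<dy. a2 i * (2 ^ M) ^ (dy - 1 - i))"
      by (rule of_nat_eq_iff[THEN iffD1])
    have p1: "\<forall>i<dy. a1 i < 2 ^ M" using a1 by blast
    have p2: "\<forall>i<dy. a2 i < 2 ^ M" using a2 by blast
    have aa: "\<forall>i<dy. a1 i = a2 i" using digits_uniq[of "2^M" dy a1 a2, OF _ p1 p2 N] by simp
    have yy: "\<forall>i<dy. y1 i = y2 i"
    proof (intro allI impI)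
      fix i assume "i < dy" thus "y1 i = y2 i" using a1 a2 aa by metis
    qed
    show ?thesis
    proof
      fix i show "y1 i = y2 i" using h1 h2 yy by (cases "i < dy") auto
    qed
  qed
  show ?thesis by (rule ex1I[of _ yh]) (use ex un in auto)
qed

lemma decode_spec:
  assumes "c \<in> dyadic (dy * M)"
  shows "(\<forall>i<dy. decode dy M c i \<in> dyadic M) \<and> encode dy M (decode dy M c) = c"
  using theI'[OF decode_ex1[OF assms]] unfolding decode_def by blast

lemma decode_last:
  assumes "c \<in> dyadic (dy * M)" "dy \<ge> 1"
  shows "decode dy M c (dy - 1) = 2 ^ ((dy - 1) * M) * (c - (\<Sum>i<dy - 1. decode dy M c i / 2 ^ (i * M)))"
proof -
  have s: "c = (\<Sum>i<dy. decode dy M c i / 2 ^ (i * M))"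
    using encode_dyadic[OF conjunct1[OF decode_spec[OF assms(1)]]] conjunct2[OF decode_spec[OF assms(1)]] by simp
  have "{..<dy} = insert (dy - 1) {..<dy - 1}" using assms(2) by auto
  hence "c = decode dy M c (dy - 1) / 2 ^ ((dy - 1) * M) + (\<Sum>i<dy - 1. decode dy M c i / 2 ^ (i * M))"
    using s by simp
  thus ?thesis by (simp add: field_simps)
qed


fun appo :: "bool \<times> real \<times> real \<Rightarrow> real \<Rightarrow> real \<Rightarrow> real" where
  "appo (mx, a, b) acc x = (if mx then max acc (a * x + b) else min acc (a * x + b))"

definition fval :: "(bool \<times> real \<times> real) list \<Rightarrow> real \<Rightarrow> real" where
  "fval os x = foldl (\<lambda>acc p. appo p acc x) 0 os"

lemma fval_snoc: "fval (os @ [p]) x = appo p (fval os x) x"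
  unfolding fval_def by simp

lemma interp:
  fixes P :: "real set" and v :: "real \<Rightarrow> real"
  assumes "finite P"
  shows "\<exists>os. \<forall>x\<in>P. fval os x = v x"
  using assms
proof (induction P rule: finite_linorder_max_induct)
  case empty thus ?case by simp
next
  case (insert b A)
  then obtain os where os: "\<forall>x\<in>A. fval os x = v x" by blast
  define S where "S = (\<Sum>a\<in>A. \<bar>v b - v a\<bar> / (b - a))"
  have Sa: "\<bar>v b - v a\<bar> \<le> S * (b - a)" if "a \<in> A" for a
  proof -
    have "\<bar>v b - v a\<bar> / (b - a) \<le> S" unfolding S_def
      by (rule member_le_sum) (use insert that in auto)
    moreover have "b - a > 0" using insert that by auto
    ultimately show ?thesis by (simp add: divide_le_eq)
  qed
  show ?case
  proof (cases "fval os b \<le> v b")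
    case True
    define p where "p = (True, S, v b - S * b)"
    have "\<forall>x\<in>insert b A. fval (os @ [p]) x = v x"
    proof
      fix x assume "x \<in> insert b A"
      then consider "x = b" | "x \<in> A" by blast
      thus "fval (os @ [p]) x = v x"
      proof cases
        case 1 thus ?thesis using True by (simp add: fval_snoc p_def)
      next
        case 2
        have "S * x + (v b - S * b) \<le> v x" using Sa[OF 2] by (simp add: algebra_simps abs_le_iff)
        thus ?thesis using os 2 by (simp add: fval_snoc p_def)
      qed
    qed
    thus ?thesis by blast
  next
    case False
    define p where "p = (False, - S, v b + S * b)"
    have "\<forall>x\<in>insert b A. fval (os @ [p]) x = v x"
    proof
      fix x assume "x \<in> insert b A"
      then consider "x = b" | "x \<in> A" by blast
      thus "fval (os @ [p]) x = v x"
      proof cases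
        case 1 thus ?thesis using False by (simp add: fval_snoc p_def)
      next
        case 2
        have "- S * x + (v b + S * b) \<ge> v x" using Sa[OF 2] by (simp add: algebra_simps abs_le_iff)
        thus ?thesis using os 2 by (simp add: fval_snoc p_def)
      qed
    qed
    thus ?thesis by blast
  qed
qed


fun hid :: "nat list \<Rightarrow> layer list \<Rightarrow> (nat \<Rightarrow> real) \<Rightarrow> (nat \<Rightarrow> real)" where
  "hid (d # ds) (l # ls) x = hid ds ls (\<lambda>i. relu (affine l d x i))"
| "hid _ _ x = x"

lemma hid_append:
  "length D1 = length H1 \<Longrightarrow> hid (D1 @ D2) (H1 @ H2) x = hid D2 H2 (hid D1 H1 x)"
proof (induction H1 arbitrary: D1 x)
  case Nil thus ?case by simp
next
  case (Cons h H1)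
  then obtain d D1' where "D1 = d # D1'" by (cases D1) auto
  with Cons show ?case by simp
qed

lemma net_eval_split:
  "length D = length H \<Longrightarrow> net_eval (D @ [d, e]) (H @ [lf]) x = affine lf d (hid D H x)"
proof (induction H arbitrary: D x)
  case Nil thus ?case by simp
next
  case (Cons h H)
  then obtain d0 D' where D: "D = d0 # D'" by (cases D) auto
  obtain l' ls where L: "H @ [lf] = l' # ls" by (cases "H @ [lf]") auto
  have "net_eval (D @ [d, e]) ((h # H) @ [lf]) x = net_eval (d0 # (D' @ [d, e])) (h # l' # ls) x"
    using D L by simp
  also have "\<dots> = net_eval (D' @ [d, e]) (l' # ls) (\<lambda>i. relu (affine h d0 x i))" by simp
  also have "\<dots> = affine lf d (hid D' H (\<lambda>i. relu (affine h d0 x i)))"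
    using Cons L D by (metis length_Cons nat.inject)
  finally show ?case using D by simp
qed

lemma relu_nonneg: "relu y \<ge> 0" unfolding relu_def by simp
lemma relu_id: "y \<ge> 0 \<Longrightarrow> relu y = y" unfolding relu_def by simp

lemma hid_nonneg: "(\<forall>j. x j \<ge> 0) \<Longrightarrow> hid D H x j \<ge> 0"
proof (induction D H x rule: hid.induct)
  case (1 d ds l ls x) thus ?case using relu_nonneg by simp
qed auto

definition copy_layer :: "nat \<Rightarrow> (nat \<Rightarrow> real) \<Rightarrow> real \<Rightarrow> layer" where
  "copy_layer t w b0 = ((\<lambda>i j. if i = t then w j else if j = i then 1 else 0), (\<lambda>i. if i = t then b0 else 0))"

lemma delta_sum:
  "i < (n::nat) \<Longrightarrow> (\<Sum>j<n. (if j = i then a else 0) * x j) = a * (x i :: real)"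
proof -
  assume "i < n"
  have "(\<Sum>j<n. (if j = i then a else 0) * x j) = (\<Sum>j<n. if j = i then a * x j else 0)"
    by (rule sum.cong) auto
  also have "\<dots> = a * x i" using \<open>i < n\<close> by (simp add: sum.delta)
  finally show ?thesis .
qed

lemma affine_copy:
  "i < n \<Longrightarrow> affine (copy_layer t w b0) n x i = (if i = t then (\<Sum>j<n. w j * x j) + b0 else x i)"
  unfolding affine_def copy_layer_def using delta_sum[of i n 1 x] by auto

definition w2 :: "nat \<Rightarrow> real \<Rightarrow> nat \<Rightarrow> real \<Rightarrow> nat \<Rightarrow> real" where
  "w2 ci p zi q = (\<lambda>j. (if j = ci then p else 0) + (if j = zi then q else 0))"

lemma sum_w2:
  "ci < n \<Longrightarrow> zi < n \<Longrightarrow> ci \<noteq> zi \<Longrightarrow> (\<Sum>j<n. w2 ci p zi q j * x j) = p * x ci + q * x zi"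
  unfolding w2_def distrib_right sum.distrib by (simp add: delta_sum)

fun rd :: "real \<times> real \<times> real \<Rightarrow> real \<Rightarrow> real \<Rightarrow> real" where
  "rd (al, s, be) c z = al * c + s * z + be"

fun ro :: "bool \<times> real \<times> real \<Rightarrow> real \<times> real \<times> real" where
  "ro (mx, a, b) = (a, if mx then 1 else -1, b)"

fun oplayer :: "nat \<Rightarrow> real \<times> real \<times> real \<Rightarrow> bool \<times> real \<times> real \<Rightarrow> layer" where
  "oplayer n (al, s, be) (mx, a, b) =
    (if mx then copy_layer (n - 2) (w2 (n - 1) (al - a) (n - 2) s) (be - b)
     else copy_layer (n - 2) (w2 (n - 1) (a - al) (n - 2) (- s)) (b - be))"

fun oplayers :: "nat \<Rightarrow> real \<times> real \<times> real \<Rightarrow> (bool \<times> real \<times> real) list \<Rightarrow> layer list" where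
  "oplayers n r [] = []"
| "oplayers n r (p # ps) = oplayer n r p # oplayers n (ro p) ps"

fun rfin :: "real \<times> real \<times> real \<Rightarrow> (bool \<times> real \<times> real) list \<Rightarrow> real \<times> real \<times> real" where
  "rfin r [] = r"
| "rfin r (p # ps) = rfin (ro p) ps"

lemma oplayer_step:
  fixes n :: nat and x :: "nat \<Rightarrow> real" and r :: "real \<times> real \<times> real" and p :: "bool \<times> real \<times> real"
  assumes n: "n \<ge> 2" and nn: "\<forall>j. x j \<ge> 0"
  defines "y \<equiv> (\<lambda>i. relu (affine (oplayer n r p) n x i))"
  shows "(\<forall>j<n. j \<noteq> n - 2 \<longrightarrow> y j = x j) \<and>
         rd (ro p) (x (n - 1)) (y (n - 2)) = appo p (rd r (x (n - 1)) (x (n - 2))) (x (n - 1))"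
proof -
  obtain al s be where r: "r = (al, s, be)" by (cases r) auto
  obtain mx a b where p: "p = (mx, a, b)" by (cases p) auto
  have i: "n - 1 < n" "n - 2 < n" "n - 1 \<noteq> n - 2" using n by auto
  have c1: "\<forall>j<n. j \<noteq> n - 2 \<longrightarrow> y j = x j"
    using nn unfolding y_def r p by (auto simp: affine_copy relu_id)
  have c2: "rd (ro p) (x (n - 1)) (y (n - 2)) = appo p (rd r (x (n - 1)) (x (n - 2))) (x (n - 1))"
  proof (cases mx)
    case True
    have "y (n - 2) = relu ((al - a) * x (n - 1) + s * x (n - 2) + (be - b))"
      unfolding y_def r p using True i by (simp add: affine_copy sum_w2)
    thus ?thesis using True unfolding r p by (simp add: relu_def max_def algebra_simps)
  next
    case False
    have "y (n - 2) = relu ((a - al) * x (n - 1) + - s * x (n - 2) + (b - be))"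
      unfolding y_def r p using False i by (simp add: affine_copy sum_w2)
    thus ?thesis using False unfolding r p by (simp add: relu_def min_def max_def algebra_simps)
  qed
  show ?thesis using c1 c2 by blast
qed

lemma oplayers_correct:
  assumes n: "n \<ge> 2"
  shows "(\<forall>j. x j \<ge> 0) \<Longrightarrow>
    (\<forall>j. hid (replicate (length ps) n) (oplayers n r ps) x j \<ge> 0) \<and>
    (\<forall>j<n. j \<noteq> n - 2 \<longrightarrow> hid (replicate (length ps) n) (oplayers n r ps) x j = x j) \<and>
    rd (rfin r ps) (x (n - 1)) (hid (replicate (length ps) n) (oplayers n r ps) x (n - 2))
      = foldl (\<lambda>acc p. appo p acc (x (n - 1))) (rd r (x (n - 1)) (x (n - 2))) ps"
proof (induction ps arbitrary: r x)
  case Nil thus ?case by simp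
next
  case (Cons p ps)
  define y where "y = (\<lambda>i. relu (affine (oplayer n r p) n x i))"
  have st: "(\<forall>j<n. j \<noteq> n - 2 \<longrightarrow> y j = x j) \<and>
         rd (ro p) (x (n - 1)) (y (n - 2)) = appo p (rd r (x (n - 1)) (x (n - 2))) (x (n - 1))"
    using oplayer_step[OF n Cons.prems] unfolding y_def .
  have yn: "\<forall>j. y j \<ge> 0" unfolding y_def using relu_nonneg by simp
  have y1: "y (n - 1) = x (n - 1)" using st n by auto
  have h: "hid (replicate (length (p # ps)) n) (oplayers n r (p # ps)) x
         = hid (replicate (length ps) n) (oplayers n (ro p) ps) y" unfolding y_def by simp
  note IH = Cons.IH[of y "ro p", OF yn]
  show ?case unfolding h using IH st y1 by auto
qed


fun commit :: "nat \<Rightarrow> nat \<Rightarrow> real \<times> real \<times> real \<Rightarrow> layer" where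
  "commit n i (al, s, be) = copy_layer i (w2 (n - 1) al (n - 2) s) be"

definition phase :: "nat \<Rightarrow> nat \<Rightarrow> (bool \<times> real \<times> real) list \<Rightarrow> layer list" where
  "phase n i ps = oplayers n (0, 0, 0) ps @ [commit n i (rfin (0, 0, 0) ps)]"

lemma length_oplayers: "length (oplayers n r ps) = length ps"
  by (induction ps arbitrary: r) auto

lemma length_phase: "length (phase n i ps) = length ps + 1"
  unfolding phase_def by (simp add: length_oplayers)

lemma affine_commit:
  assumes "n \<ge> 2" "i < n"
  shows "affine (commit n i r) n z i = rd r (z (n - 1)) (z (n - 2))"
proof -
  obtain al s be where r: "r = (al, s, be)" by (cases r) auto
  have "n - 1 < n" "n - 2 < n" "n - 1 \<noteq> n - 2" using assms by auto
  thus ?thesis unfolding r using assms by (simp add: affine_copy sum_w2)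
qed

lemma phase_correct:
  fixes x :: "nat \<Rightarrow> real"
  assumes n: "n \<ge> 2" and i: "i \<le> n - 2" and nn: "\<forall>j. x j \<ge> 0"
    and T: "fval ps (x (n - 1)) = T" "T \<ge> 0"
  defines "y \<equiv> hid (replicate (length (phase n i ps)) n) (phase n i ps) x"
  shows "(\<forall>j. y j \<ge> 0) \<and> y i = T \<and> (\<forall>j<n. j \<noteq> i \<and> j \<noteq> n - 2 \<longrightarrow> y j = x j)"
proof -
  define z where "z = hid (replicate (length ps) n) (oplayers n (0, 0, 0) ps) x"
  have oc: "(\<forall>j. z j \<ge> 0) \<and> (\<forall>j<n. j \<noteq> n - 2 \<longrightarrow> z j = x j) \<and>
    rd (rfin (0,0,0) ps) (x (n - 1)) (z (n - 2))
      = foldl (\<lambda>acc p. appo p acc (x (n - 1))) (rd (0,0,0) (x (n - 1)) (x (n - 2))) ps"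
    using oplayers_correct[OF n nn, of ps "(0,0,0)"] unfolding z_def by blast
  have z1: "z (n - 1) = x (n - 1)" using oc n by auto
  have rdT: "rd (rfin (0,0,0) ps) (z (n - 1)) (z (n - 2)) = T"
    using oc z1 T(1) unfolding fval_def by simp
  have "replicate (length (phase n i ps)) n = replicate (length ps) n @ [n]"
    by (simp add: length_phase replicate_append_same)
  hence y: "y = hid [n] [commit n i (rfin (0, 0, 0) ps)] z"
    unfolding y_def z_def phase_def by (simp add: hid_append length_oplayers)
  have iN: "i < n" using i n by auto
  have "y i = T" unfolding y using affine_commit[OF n iN] rdT T(2) by (simp add: relu_id)
  moreover have "\<forall>j. y j \<ge> 0" unfolding y by (simp add: relu_nonneg)
  moreover have "\<forall>j<n. j \<noteq> i \<and> j \<noteq> n - 2 \<longrightarrow> y j = x j"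
  proof (intro allI impI)
    fix j assume j0: "j < n" "j \<noteq> i \<and> j \<noteq> n - 2"
    hence j: "j < n \<and> j \<noteq> i \<and> j \<noteq> n - 2" by blast
    obtain al s be where r: "rfin (0,0,0) ps = (al, s, be)" by (cases "rfin (0,0,0) ps") auto
    have "y j = relu (z j)" unfolding y r using j by (simp add: affine_copy)
    also have "\<dots> = z j" using oc by (simp add: relu_id)
    also have "\<dots> = x j" using oc j by auto
    finally show "y j = x j" .
  qed
  ultimately show ?thesis by blast
qed

lemma foldr_max_rep0: "foldr max (replicate m (n::nat)) 0 = (if m = 0 then 0 else n)"
proof (induction m)
  case 0 thus ?case by simp
next
  case (Suc m)
  have "foldr max (replicate (Suc m) n) 0 = max n (foldr max (replicate m n) 0)"
    by (simp only: replicate_Suc foldr_Cons o_apply)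
  thus ?case using Suc by simp
qed

lemma foldr_max_rep: "m > 0 \<Longrightarrow> foldr max (replicate m (n::nat)) 0 = n"
  using foldr_max_rep0 by simp

lemma affine_Bl:
  "i < n \<Longrightarrow> affine ((\<lambda>i j. if j = i then -1 else 0), (\<lambda>i. 1)) n v i = 1 - v i"
  unfolding affine_def using delta_sum[of i n "-1" v] by simp

lemma rep2: "replicate m x @ [x, x] = x # x # replicate m x"
  by (induction m) auto

theorem lemma6:
  fixes dy M :: nat and \<delta> :: real
  assumes "dy \<ge> 1" and "M \<ge> 1" and "\<delta> > 0"
  shows "\<exists>dims layers. relu_net 1 dy dims layers \<and> net_width dims = dy \<and>
           (\<forall>c \<in> dyadic (dy * M). \<forall>i<dy. net_eval dims layers (\<lambda>_. c) i = decode dy M c i) \<and>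
           (\<forall>x::real. \<forall>i<dy. net_eval dims layers (\<lambda>_. x) i \<in> {0..1})"
proof -
  define n where "n = dy"
  have n1: "n \<ge> 1" using assms(1) n_def by simp
  define G where "G = dyadic (n * M)"
  define ops where "ops k = (SOME ps. \<forall>c\<in>G. fval ps c = decode n M c k)" for k
  have ops: "\<forall>c\<in>G. fval (ops k) c = decode n M c k" for k
  proof -
    have "\<exists>ps. \<forall>c\<in>G. fval ps c = decode n M c k"
      using interp[of G "\<lambda>c. decode n M c k"] dyadic_finite unfolding G_def by blast
    thus ?thesis unfolding ops_def by (rule someI_ex)
  qed
  define PP where "PP k = concat (map (\<lambda>i. phase n i (ops i)) [0..<k])" for k
  define Lin :: layer where "Lin = ((\<lambda>i j. 1), (\<lambda>i. 0))"
  define K :: real where "K = 2 ^ ((n - 1) * M)"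
  define wA where "wA j = (if j = n - 1 then K else if j < n - 1 then - (K / 2 ^ (j * M)) else 0)" for j
  define A where "A = copy_layer (n - 1) wA 0"
  define Bl :: layer where "Bl = ((\<lambda>i j. if j = i then -1 else 0), (\<lambda>i. 1))"
  define P where "P = PP (n - 1)"
  define H where "H = Lin # (P @ [A, Bl])"
  define D where "D = 1 # replicate (length P + 2) n"
  define dims where "dims = D @ [n, n]"
  define layers where "layers = H @ [Bl]"
  have rn: "relu_net 1 dy dims layers"
    unfolding relu_net_def dims_def layers_def D_def H_def n_def by simp
  have "butlast (tl dims) = replicate (length P + 3) n"
  proof -
    have "butlast (tl dims) = replicate (length P + 2) n @ [n]" unfolding dims_def D_def
      by (simp add: butlast_append)
    also have "\<dots> = replicate (length P + 3) n"
      by (metis add_Suc_right numeral_3_eq_3 numeral_2_eq_2 replicate_Suc replicate_append_same)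
    finally show ?thesis .
  qed
  hence nw: "net_width dims = dy" unfolding net_width_def n_def using foldr_max_rep by simp
  have Dsplit: "D = [1] @ replicate (length P) n @ [n, n]"
    unfolding D_def by (simp add: rep2)
  have ev: "net_eval dims layers x i = 1 - relu (1 - relu (affine A n
              (hid (replicate (length P) n) P (\<lambda>i. relu (x 0))) i))" if "i < n" for x i
  proof -
    have "net_eval dims layers x = affine Bl n (hid D H x)"
      unfolding dims_def layers_def by (rule net_eval_split) (simp add: D_def H_def)
    also have "hid D H x = hid [n, n] [A, Bl] (hid (replicate (length P) n) P (hid [1] [Lin] x))"
      unfolding Dsplit H_def by (simp add: hid_append)
    also have "hid [1] [Lin] x = (\<lambda>i. relu (x 0))" unfolding Lin_def by (simp add: affine_def)
    finally show ?thesis using that unfolding Bl_def by (simp add: affine_Bl)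
  qed
  have range: "\<forall>x::real. \<forall>i<dy. net_eval dims layers (\<lambda>_. x) i \<in> {0..1}"
  proof (intro allI impI)
    fix x :: real and i assume "i < dy"
    hence "i < n" using n_def by simp
    show "net_eval dims layers (\<lambda>_. x) i \<in> {0..1}" unfolding ev[OF \<open>i < n\<close>]
      using relu_nonneg by (auto simp: relu_def)
  qed
  have corr: "\<forall>c \<in> dyadic (dy * M). \<forall>i<dy. net_eval dims layers (\<lambda>_. c) i = decode dy M c i"
  proof (intro ballI allI impI)
    fix c i assume c: "c \<in> dyadic (dy * M)" and i: "i < dy"
    have cG: "c \<in> G" using c unfolding G_def n_def .
    have c0: "c \<ge> 0" using dyadic_bounds[OF c] by simp
    have dec: "decode n M c j \<in> dyadic M" if "j < n" for j using decode_spec[OF c] that n_def by auto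
    define s0 where "s0 = (\<lambda>i::nat. relu c)"
    have s0: "s0 = (\<lambda>i. c)" unfolding s0_def using c0 by (simp add: relu_id)
    have inv: "k \<le> n - 1 \<Longrightarrow> (\<forall>j. hid (replicate (length (PP k)) n) (PP k) s0 j \<ge> 0) \<and>
       hid (replicate (length (PP k)) n) (PP k) s0 (n - 1) = c \<and>
       (\<forall>j<k. hid (replicate (length (PP k)) n) (PP k) s0 j = decode n M c j)" for k
    proof (induction k)
      case 0 thus ?case unfolding PP_def s0 using c0 by simp
    next
      case (Suc k)
      define sk where "sk = hid (replicate (length (PP k)) n) (PP k) s0"
      have IH: "(\<forall>j. sk j \<ge> 0) \<and> sk (n - 1) = c \<and> (\<forall>j<k. sk j = decode n M c j)"
        using Suc unfolding sk_def by simp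
      have n2: "n \<ge> 2" and kn: "k \<le> n - 2" using Suc.prems by auto
      have PPs: "PP (Suc k) = PP k @ phase n k (ops k)" unfolding PP_def by simp
      have hs: "hid (replicate (length (PP (Suc k))) n) (PP (Suc k)) s0
          = hid (replicate (length (phase n k (ops k))) n) (phase n k (ops k)) sk"
        unfolding PPs sk_def by (simp add: replicate_add hid_append)
      have "k < n" using kn n2 by simp
      hence T0: "decode n M c k \<ge> 0" using dyadic_bounds[OF dec[of k]] by simp
      have fv: "fval (ops k) (sk (n - 1)) = decode n M c k" using IH ops cG by simp
      note pc = phase_correct[OF n2 kn conjunct1[OF IH] fv T0]
      define y where "y = hid (replicate (length (phase n k (ops k))) n) (phase n k (ops k)) sk"
      have p1: "\<forall>j. y j \<ge> 0" and p2: "y k = decode n M c k"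
        and p3: "\<forall>j<n. j \<noteq> k \<and> j \<noteq> n - 2 \<longrightarrow> y j = sk j"
        using pc unfolding y_def by blast+
      have "n - 1 < n" "n - 1 \<noteq> k" "n - 1 \<noteq> n - 2" using kn n2 by auto
      hence "y (n - 1) = sk (n - 1)" using p3 by blast
      hence y1: "y (n - 1) = c" using IH by simp
      have y2: "\<forall>j<Suc k. y j = decode n M c j"
      proof (intro allI impI)
        fix j assume "j < Suc k"
        show "y j = decode n M c j"
        proof (cases "j = k")
          case True thus ?thesis using p2 by simp
        next
          case False
          hence "j < k" using \<open>j < Suc k\<close> by simp
          hence "j < n" "j \<noteq> k" "j \<noteq> n - 2" using kn n2 by auto
          hence "y j = sk j" using p3 by blast
          thus ?thesis using IH \<open>j < k\<close> by simp
        qed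
      qed
      show ?case unfolding hs y_def[symmetric] using p1 y1 y2 by blast
    qed
    define s where "s = hid (replicate (length P) n) P s0"
    have S: "(\<forall>j. s j \<ge> 0) \<and> s (n - 1) = c \<and> (\<forall>j<n - 1. s j = decode n M c j)"
      using inv[of "n - 1"] unfolding s_def P_def by simp
    have u: "relu (affine A n s j) = decode n M c j" if "j < n" for j
    proof (cases "j = n - 1")
      case True
      have ins: "{..<n} = insert (n - 1) {..<n - 1}" using n1 by auto
      have "(\<Sum>j<n. wA j * s j) = K * c + (\<Sum>j<n - 1. - (K / 2 ^ (j * M)) * decode n M c j)"
        unfolding ins using S by (simp add: wA_def)
      also have "\<dots> = decode n M c (n - 1)"
        unfolding decode_last[OF cG[unfolded G_def] n1] K_def[symmetric]
        by (simp add: right_diff_distrib sum_distrib_left sum_negf)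
      finally have "affine A n s j = decode n M c j" unfolding A_def using True that
        by (simp add: affine_copy)
      thus ?thesis using dec[OF that] dyadic_bounds by (simp add: relu_id)
    next
      case False
      hence "affine A n s j = decode n M c j" unfolding A_def using that S by (simp add: affine_copy)
      thus ?thesis using dec[OF that] dyadic_bounds by (simp add: relu_id)
    qed
    have iN: "i < n" using i n_def by simp
    have "net_eval dims layers (\<lambda>_. c) i = 1 - relu (1 - decode n M c i)"
      using ev[OF iN, of "\<lambda>_. c"] u[OF iN] unfolding s_def s0_def by simp
    also have "\<dots> = decode n M c i" using dyadic_bounds[OF dec[OF iN]] by (simp add: relu_def)
    finally show "net_eval dims layers (\<lambda>_. c) i = decode dy M c i" using n_def by simp
  qed
  show ?thesis using rn nw corr range by blast
qed


end
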